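(* Let $(\tilde\Omega,\tilde{\mathcal F},(\tilde{\mathcal F}_t)_{t\ge0},\tilde{\mathbb P})$, $\tilde W$, $\tilde u$, $\tilde u_0$ be as provided by the existence theorem described in the context, and let $\alpha\in(-\tfrac13,0)$. Then $\tilde{\mathbb P}$-almost surely $\tilde u$ exhibits a zero contact angle in the following sense: for almost all $t_0\in(0,T]$, at every point $x_0\in\mathcal O$ with $\tilde u(x_0,t_0,\omega)=0$ the classical derivative $\frac{\partial}{\partial x}\tilde u(x_0,t_0,\omega)$ exists and equals $0$.
   Context: Setting: $L,T>0$, $\mathcal O=[0,L]$, $\mathcal O_T=(0,L)\times(0,T)$, periodic boundary conditions (subscript "per"). Basis $g_k(x)=\sqrt{2/L}\sin(2\pi kx/L)$ ($k>0$), $g_0=1/\sqrt L$, $g_k(x)=\sqrt{2/L}\cos(2\pi kx/L)$ ($k<0$); nonnegative numbers $\lambda_k$ with $\lambda_{-k}=\lambda_k$ and $\sum_k k^4\lambda_k^2<\infty$. $\Lambda^0$ is a probability measure on $H^1_{\mathrm{per}}(\mathcal O)$ supported on nonnegative functions with $\operatorname{ess\,sup}_{v\in\operatorname{supp}\Lambda^0}\{\int_{\mathcal O}\tfrac12|v_x|^2+\int_{\mathcal O}v\}\le C$. Existence theorem (under these hypotheses and mobility $m(u)=u^2$): there exist a stochastic basis $(\tilde\Omega,\tilde{\mathcal F},(\tilde{\mathcal F}_t),\tilde{\mathbb P})$, an adapted $Q$-Wiener process $\tilde W=\sum_k\lambda_kg_k\tilde\beta_k$, a process $\tilde u\in L^2(\tilde\Omega;L^2(0,T;W^{1,3}_{\mathrm{per}}(\mathcal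 O)))\cap L^2(\tilde\Omega;C^{\tilde\gamma,\tilde\sigma}(\overline{\mathcal O_T}))$ ($\tilde\gamma<1/2,\tilde\sigma<1/8$, Hölder in space/time) and $\tilde u_0\in L^2(\tilde\Omega;H^1_{\mathrm{per}}(\mathcal O))$ such that $\tilde u,\tilde u_0\ge0$ a.s.; $\Lambda^0=\tilde{\mathbb P}\circ\tilde u_0^{-1}$; for all $t\in[0,T]$, $\phi\in H^3_{\mathrm{per}}(\mathcal O)$, a.s. $\int_{\mathcal O}(\tilde u(t)-\tilde u_0)\phi=\int_0^t\int_{\{\tilde u>0\}}\tilde u_x^3\phi_x+3\int_0^t\int_{\mathcal O}\tilde u\tilde u_x^2\phi_{xx}+\int_0^t\int_{\mathcal O}\tilde u^2\tilde u_x\phi_{xxx}-\frac12\int_0^t\int_{\mathcal O}\sum_k\lambda_k^2g_k(g_k\tilde u)_x\phi_x-\sum_k\int_0^t\int_{\mathcal O}\lambda_kg_k\tilde u\phi_x\,dx\,d\tilde\beta_k$; and for every $q\ge1$, $\alpha\in(-1/3,0)$: $\tilde{\mathbb E}[\sup_t(\int_{\mathcal O}\frac12|\tilde u_x|^2)^q]+\tilde{\mathbb E}[(\int_0^T\int_{\mathcal O}((\tilde u)^{\frac{\alpha+3}{4}})_x^4)^q]+\tilde{\mathbb E}[(\int_0^T\int_{\mathcal O}((\tilde u)^{\frac{\alpha+3}{2}})_{xx}^2)^q]\le C(\tilde u_0,q,T)$. *)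

theory Defs
  imports "HOL-Probability.Probability"
begin

definition per_C2_test :: "real \<Rightarrow> (real \<Rightarrow> real) \<Rightarrow> (real \<Rightarrow> real) \<Rightarrow> (real \<Rightarrow> real) \<Rightarrow> bool" where
  "per_C2_test L \<phi> \<phi>' \<phi>'' \<longleftrightarrow>
     (\<forall>x. \<phi> (x + L) = \<phi> x) \<and>
     (\<forall>x. (\<phi> has_real_derivative \<phi>' x) (at x)) \<and>
     (\<forall>x. (\<phi>' has_real_derivative \<phi>'' x) (at x)) \<and>
     continuous_on UNIV \<phi>''"

definition weak_dxx_per :: "real \<Rightarrow> (real \<Rightarrow> real) \<Rightarrow> (real \<Rightarrow> real) \<Rightarrow> bool" where
  "weak_dxx_per L f g \<longleftrightarrow>
     set_integrable lborel {0..L} f \<and> set_integrable lborel {0..L} g \<and>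
     (\<forall>\<phi> \<phi>' \<phi>''. per_C2_test L \<phi> \<phi>' \<phi>'' \<longrightarrow>
        (LINT x:{0..L}|lborel. f x * \<phi>'' x) = (LINT x:{0..L}|lborel. g x * \<phi> x))"

definition per_ext :: "real \<Rightarrow> (real \<Rightarrow> real) \<Rightarrow> real \<Rightarrow> real" where
  "per_ext L f x = f (x - L * of_int \<lfloor>x / L\<rfloor>)"

end

theory Submission
  imports Defs
begin

lemma floor_div_eq:
  fixes L x :: real and k :: int
  assumes "L > 0" "of_int k * L \<le> x" "x < (of_int k + 1) * L"
  shows "\<lfloor>x / L\<rfloor> = k"
proof (rule floor_unique)
  show "of_int k \<le> x / L" using assms by (simp add: pos_le_divide_eq)
  show "x / L < of_int k + 1" using assms by (simp add: pos_divide_less_eq)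
qed

lemma per_ext_near:
  fixes L x0 :: real and f :: "real \<Rightarrow> real"
  assumes L: "L > 0" and x0: "x0 \<in> {0..L}"
  obtains \<delta> where "\<delta> > 0" "\<And>x. \<bar>x - x0\<bar> < \<delta> \<Longrightarrow> \<exists>y\<in>{0..L}. \<exists>z\<in>{0..L}.
     per_ext L f x = f y \<and> \<bar>y - z\<bar> = \<bar>x - x0\<bar> \<and> (z = x0 \<or> (x0 \<in> {0,L} \<and> z \<in> {0,L}))"
proof (cases "x0 = 0 \<or> x0 = L")
  case True
  show ?thesis
  proof (rule that[of "L/2"])
    show "L/2 > 0" using L by simp
    fix x assume x: "\<bar>x - x0\<bar> < L/2"
    show "\<exists>y\<in>{0..L}. \<exists>z\<in>{0..L}.
     per_ext L f x = f y \<and> \<bar>y - z\<bar> = \<bar>x - x0\<bar> \<and> (z = x0 \<or> (x0 \<in> {0,L} \<and> z \<in> {0,L}))"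
    proof (cases "x0 = 0")
      case True
      show ?thesis
      proof (cases "x \<ge> 0")
        case True
        have "\<lfloor>x / L\<rfloor> = 0" using floor_div_eq[of L 0 x] L x \<open>x0 = 0\<close> True by simp
        note fl = this
        show ?thesis by (rule bexI[where x=x], rule bexI[where x=0]) (use fl True x L \<open>x0 = 0\<close> in \<open>auto simp: per_ext_def\<close>)
      next
        case False
        have "\<lfloor>x / L\<rfloor> = -1" using floor_div_eq[of L "-1" x] L x \<open>x0 = 0\<close> False by simp
        note fl = this
        show ?thesis by (rule bexI[where x="x + L"], rule bexI[where x=L]) (use fl False x L \<open>x0 = 0\<close> in \<open>auto simp: per_ext_def\<close>)
      qed
    next
      case False
      then have "x0 = L" using True by simp
      show ?thesis
      proof (cases "x < L")
        case True
        have "\<lfloor>x / L\<rfloor> = 0" using floor_div_eq[of L 0 x] L x \<open>x0 = L\<close> True by simp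
        note fl = this
        show ?thesis by (rule bexI[where x=x], rule bexI[where x=L]) (use fl True x L \<open>x0 = L\<close> in \<open>auto simp: per_ext_def\<close>)
      next
        case False
        have "\<lfloor>x / L\<rfloor> = 1" using floor_div_eq[of L 1 x] L x \<open>x0 = L\<close> False by simp
        note fl = this
        show ?thesis by (rule bexI[where x="x - L"], rule bexI[where x=0]) (use fl False x L \<open>x0 = L\<close> in \<open>auto simp: per_ext_def\<close>)
      qed
    qed
  qed
next
  case False
  then have x0': "0 < x0" "x0 < L" using x0 by auto
  show ?thesis
  proof (rule that[of "min x0 (L - x0)"])
    show "min x0 (L - x0) > 0" using x0' by simp
    fix x assume x: "\<bar>x - x0\<bar> < min x0 (L - x0)"
    have "\<lfloor>x / L\<rfloor> = 0" using floor_div_eq[of L 0 x] L x by (simp add: abs_less_iff)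
    note fl = this
    show "\<exists>y\<in>{0..L}. \<exists>z\<in>{0..L}.
     per_ext L f x = f y \<and> \<bar>y - z\<bar> = \<bar>x - x0\<bar> \<and> (z = x0 \<or> (x0 \<in> {0,L} \<and> z \<in> {0,L}))"
      by (rule bexI[where x=x], rule bexI[where x=x0]) (use fl x x0 in \<open>auto simp: per_ext_def abs_less_iff\<close>)
  qed
qed

lemma per_ext_at:
  assumes "L > 0" "x0 \<in> {0..L}" "f 0 = f L"
  shows "per_ext L f x0 = f x0"
proof (cases "x0 = L")
  case True
  have "\<lfloor>x0 / L\<rfloor> = 1" using True assms by simp
  then show ?thesis using True assms by (simp add: per_ext_def)
next
  case False
  have "\<lfloor>x0 / L\<rfloor> = 0" using floor_div_eq[of L 0 x0] False assms by simp
  then show ?thesis by (simp add: per_ext_def)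
qed

lemma deriv_zero_from_bound:
  fixes F :: "real \<Rightarrow> real"
  assumes d: "d > 0" and b: "1 < \<beta>" and F0: "F x0 = 0"
    and bnd: "\<And>x. \<bar>x - x0\<bar> < d \<Longrightarrow> \<bar>F x\<bar> \<le> C * \<bar>x - x0\<bar> powr \<beta>"
  shows "(F has_real_derivative 0) (at x0)"
  unfolding has_field_derivative_iff
proof (rule Lim_null_comparison)
  show "\<forall>\<^sub>F x in at x0. norm ((F x - F x0) / (x - x0)) \<le> C * \<bar>x - x0\<bar> powr (\<beta> - 1)"
    unfolding eventually_at
  proof (intro exI[of _ d] conjI ballI impI allI)
    fix x assume x: "x \<noteq> x0 \<and> dist x x0 < d"
    then have pos: "\<bar>x - x0\<bar> > 0" by simp
    have "norm ((F x - F x0) / (x - x0)) = \<bar>F x\<bar> / \<bar>x - x0\<bar>" using F0 by (simp add: abs_divide)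
    also have "\<dots> \<le> C * \<bar>x - x0\<bar> powr \<beta> / \<bar>x - x0\<bar>"
      using bnd[of x] x pos by (simp add: dist_real_def divide_right_mono)
    also have "\<dots> = C * \<bar>x - x0\<bar> powr (\<beta> - 1)"
      using pos by (simp add: powr_diff)
    finally show "norm ((F x - F x0) / (x - x0)) \<le> C * \<bar>x - x0\<bar> powr (\<beta> - 1)" .
  qed (use d in auto)
  have "((\<lambda>x. \<bar>x - x0\<bar> powr (\<beta> - 1)) \<longlongrightarrow> 0) (at x0)"
    by (rule tendsto_zero_powrI) (use b in \<open>auto intro!: tendsto_eq_intros\<close>)
  then show "((\<lambda>x. C * \<bar>x - x0\<bar> powr (\<beta> - 1)) \<longlongrightarrow> 0) (at x0)"
    using tendsto_mult_right_zero by blast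
qed

lemma slope_nonneg:
  fixes v :: "real \<Rightarrow> real"
  assumes nn: "\<forall>y\<in>{0..L}. v y \<ge> 0" and x0: "x0 \<in> {0..L}" and z: "v x0 = 0" and K: "K \<ge> 0"
    and R: "\<forall>y\<in>{0..L}. \<bar>v y - m * (y - x0)\<bar> \<le> K * \<bar>y - x0\<bar> * sqrt \<bar>y - x0\<bar>"
  shows "x0 < L \<Longrightarrow> m \<ge> 0" and "0 < x0 \<Longrightarrow> m \<le> 0"
proof -
  assume "x0 < L"
  show "m \<ge> 0"
  proof (rule ccontr)
    assume "\<not> m \<ge> 0"
    hence m: "m < 0" by simp
    define d where "d = min (L - x0) ((m / (K + 1))\<^sup>2)"
    have dpos: "d > 0" using m K \<open>x0 < L\<close> by (simp add: d_def)
    have "sqrt d \<le> sqrt ((m / (K + 1))\<^sup>2)" by (rule real_sqrt_le_mono) (simp add: d_def)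
    also have "\<dots> = - m / (K + 1)" using m K by (simp add: abs_if divide_neg_pos)
    finally have sd: "sqrt d \<le> - m / (K + 1)" .
    have "K * sqrt d \<le> K * (- m / (K + 1))" using mult_left_mono[OF sd K] by simp
    also have "\<dots> < - m" using m K by (simp add: field_simps)
    finally have ks: "K * sqrt d < - m" .
    have "d \<le> L - x0" by (simp add: d_def)
    hence y: "x0 + d \<in> {0..L}" using x0 dpos by auto
    have "v (x0 + d) \<le> m * d + K * d * sqrt d" using R[rule_format, OF y] dpos by (simp add: abs_le_iff)
    also have "\<dots> = d * (m + K * sqrt d)" by (simp add: algebra_simps)
    also have "\<dots> < 0" using ks dpos by (simp add: mult_pos_neg)
    finally show False using bspec[OF nn y] by simp
  qed
next
  assume "0 < x0"
  show "m \<le> 0"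
  proof (rule ccontr)
    assume "\<not> m \<le> 0"
    hence m: "m > 0" by simp
    define d where "d = min x0 ((m / (K + 1))\<^sup>2)"
    have dpos: "d > 0" using m K \<open>0 < x0\<close> by (simp add: d_def)
    have "sqrt d \<le> sqrt ((m / (K + 1))\<^sup>2)" by (rule real_sqrt_le_mono) (simp add: d_def)
    also have "\<dots> = m / (K + 1)" using m K by (simp add: abs_if not_less)
    finally have sd: "sqrt d \<le> m / (K + 1)" .
    have "K * sqrt d \<le> K * (m / (K + 1))" using mult_left_mono[OF sd K] by simp
    also have "\<dots> < m" using m K by (simp add: field_simps)
    finally have ks: "K * sqrt d < m" .
    have "d \<le> x0" by (simp add: d_def)
    hence y: "x0 - d \<in> {0..L}" using x0 dpos by auto
    have "v (x0 - d) \<le> - m * d + K * d * sqrt d" using R[rule_format, OF y] dpos by (simp add: abs_le_iff)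
    also have "\<dots> = d * (K * sqrt d - m)" by (simp add: algebra_simps)
    also have "\<dots> < 0" using ks dpos by (simp add: mult_pos_neg)
    finally show False using bspec[OF nn y] by simp
  qed
qed

lemma per_ext_on_cell:
  fixes L :: real and j :: int
  assumes L: "L > 0" and h0: "h 0 = h L" and y: "y \<in> {of_int j * L..(of_int j + 1) * L}"
  shows "per_ext L h y = h (y - of_int j * L)"
proof (cases "y < (of_int j + 1) * L")
  case True
  then have "\<lfloor>y / L\<rfloor> = j" using floor_div_eq[of L j y] L y by simp
  then show ?thesis by (simp add: per_ext_def mult.commute)
next
  case False
  then have yy: "y = (of_int j + 1) * L" using y by simp
  have "\<lfloor>y / L\<rfloor> = j + 1" using floor_div_eq[of L "j+1" y] L yy by (simp add: algebra_simps)
  then show ?thesis using yy h0 by (simp add: per_ext_def algebra_simps)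
qed

lemma per_ext_cont_cell:
  fixes L :: real and j :: int
  assumes L: "L > 0" and h0: "h 0 = h L" and ch: "continuous_on {0..L} h"
  shows "continuous_on {of_int j * L..(of_int j + 1) * L} (per_ext L h)"
proof -
  have "continuous_on {of_int j * L..(of_int j + 1) * L} (\<lambda>y. h (y - of_int j * L))"
    by (rule continuous_on_compose2[OF ch]) (auto intro!: continuous_intros simp: algebra_simps)
  then show ?thesis
    by (rule continuous_on_cong[THEN iffD1, rotated 2]) (use per_ext_on_cell[OF L h0] in auto)
qed

lemma per_ext_cont:
  fixes L :: real
  assumes L: "L > 0" and h0: "h 0 = h L" and ch: "continuous_on {0..L} h"
  shows "continuous_on UNIV (per_ext L h)"
proof (rule continuous_at_imp_continuous_on, intro ballI)
  fix x :: real
  define k where "k = \<lfloor>x / L\<rfloor>"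
  have ka: "of_int k \<le> x / L" unfolding k_def by (rule of_int_floor_le)
  have kb: "x / L < of_int k + 1" unfolding k_def by (rule real_of_int_floor_add_one_gt)
  have kx: "of_int k * L \<le> x" "x < (of_int k + 1) * L"
    using L ka kb by (simp_all add: pos_le_divide_eq pos_divide_less_eq)
  have c1: "continuous_on {of_int (k - 1) * L..(of_int (k - 1) + 1) * L} (per_ext L h)"
    by (rule per_ext_cont_cell[OF L h0 ch])
  have c2: "continuous_on {of_int k * L..(of_int k + 1) * L} (per_ext L h)"
    by (rule per_ext_cont_cell[OF L h0 ch])
  have "continuous_on ({of_int (k - 1) * L..(of_int (k - 1) + 1) * L} \<union> {of_int k * L..(of_int k + 1) * L}) (per_ext L h)"
    by (rule continuous_on_closed_Un[OF _ _ c1 c2]) auto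
  then have "continuous_on {(of_int k - 1) * L<..<(of_int k + 1) * L} (per_ext L h)"
    by (rule continuous_on_subset) (auto simp: algebra_simps)
  moreover have "x \<in> {(of_int k - 1) * L<..<(of_int k + 1) * L}" using kx L by (auto simp: algebra_simps)
  ultimately show "isCont (per_ext L h) x"
    using continuous_on_eq_continuous_at[OF open_greaterThanLessThan] by blast
qed

lemma per_ext_periodic:
  fixes L :: real
  assumes L: "L > 0"
  shows "per_ext L h (x + L) = per_ext L h x"
proof -
  have "(x + L) / L = x / L + 1" using L by (simp add: field_simps)
  then have "\<lfloor>(x + L) / L\<rfloor> = \<lfloor>x / L\<rfloor> + 1" by simp
  then show ?thesis by (simp add: per_ext_def algebra_simps)
qed

lemma antideriv_UNIV:
  fixes q :: "real \<Rightarrow> real"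
  assumes "continuous_on UNIV q"
  obtains F where "\<And>x. (F has_real_derivative q x) (at x)"
proof -
  have "\<exists>F. \<forall>x :: real. (-\<infinity>::ereal) < x \<longrightarrow> x < (\<infinity>::ereal) \<longrightarrow> (F has_vector_derivative q x) (at x)"
    by (rule einterval_antiderivative)
       (use assms continuous_on_eq_continuous_at[OF open_UNIV] in auto)
  then show ?thesis using that by (auto simp: has_real_derivative_iff_has_vector_derivative)
qed

lemma ftc_UNIV:
  fixes F q :: "real \<Rightarrow> real"
  assumes "\<And>x. (F has_real_derivative q x) (at x)" "a \<le> b"
  shows "(q has_integral (F b - F a)) {a..b}"
  by (rule fundamental_theorem_of_calculus)
     (use assms in \<open>auto simp: has_real_derivative_iff_has_vector_derivative intro: has_vector_derivative_at_within\<close>)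

lemma periodic_antideriv:
  fixes F q :: "real \<Rightarrow> real"
  assumes d: "\<And>x. (F has_real_derivative q x) (at x)" and qp: "\<And>x. q (x + L) = q x"
    and F0: "F L = F 0"
  shows "F (x + L) = F x"
proof -
  have "\<forall>x. ((\<lambda>x. F (x + L) - F x) has_real_derivative 0) (at x)"
  proof
    fix x
    have "((\<lambda>x. F (x + L)) has_real_derivative q (x + L) * 1) (at x)"
      by (rule DERIV_chain2[OF d]) (auto intro!: derivative_eq_intros)
    then show "((\<lambda>x. F (x + L) - F x) has_real_derivative 0) (at x)"
      using DERIV_diff[OF _ d[of x]] qp by fastforce
  qed
  from DERIV_isconst_all[OF this, of x 0] F0 show ?thesis by simp
qed

lemma dbr:
  fixes e :: "real \<Rightarrow> real" and L :: real
  assumes L: "L > 0" and ce: "continuous_on {0..L} e" and e0: "e 0 = e L"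
    and orth: "\<And>\<phi> \<phi>' \<phi>''. per_C2_test L \<phi> \<phi>' \<phi>'' \<Longrightarrow> (LINT x:{0..L}|lborel. e x * \<phi>'' x) = 0"
  shows "\<forall>x\<in>{0..L}. e x = e 0"
proof -
  define m where "m = integral {0..L} e / L"
  define \<psi> where "\<psi> = (\<lambda>x. e x - m)"
  define q where "q = per_ext L \<psi>"
  have c\<psi>: "continuous_on {0..L} \<psi>" unfolding \<psi>_def by (intro continuous_intros ce)
  have \<psi>0: "\<psi> 0 = \<psi> L" using e0 by (simp add: \<psi>_def)
  have cq: "continuous_on UNIV q" unfolding q_def by (rule per_ext_cont[OF L \<psi>0 c\<psi>])
  have qp: "\<And>x. q (x + L) = q x" unfolding q_def by (rule per_ext_periodic[OF L])
  have q\<psi>: "\<And>x. x \<in> {0..L} \<Longrightarrow> q x = \<psi> x" unfolding q_def by (rule per_ext_at[OF L _ \<psi>0])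
  have ie: "e integrable_on {0..L}" by (rule integrable_continuous_interval[OF ce])
  have "integral {0..L} \<psi> = integral {0..L} e - integral {0..L} (\<lambda>x. m)"
    unfolding \<psi>_def by (rule integral_diff[OF ie integrable_const_ivl])
  also have "\<dots> = 0" using L by (simp add: m_def)
  finally have int\<psi>: "integral {0..L} \<psi> = 0" .
  have intq: "integral {0..L} q = 0"
    using int\<psi> integral_cong[of "{0..L}" q \<psi>] q\<psi> by simp
  obtain F1 where F1: "\<And>x. (F1 has_real_derivative q x) (at x)" using antideriv_UNIV[OF cq] by blast
  have "F1 L - F1 0 = integral {0..L} q" using ftc_UNIV[OF F1, of 0 L] L by (simp add: integral_unique)
  then have F1p: "\<And>x. F1 (x + L) = F1 x" using periodic_antideriv[OF F1 qp] intq by simp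
  have cF1: "continuous_on UNIV F1"
    using F1 by (meson DERIV_isCont continuous_at_imp_continuous_on)
  define c1 where "c1 = integral {0..L} F1 / L"
  define r where "r = (\<lambda>x. F1 x - c1)"
  have cr: "continuous_on UNIV r" unfolding r_def by (intro continuous_intros cF1)
  have rp: "\<And>x. r (x + L) = r x" using F1p by (simp add: r_def)
  obtain F2 where F2: "\<And>x. (F2 has_real_derivative r x) (at x)" using antideriv_UNIV[OF cr] by blast
  have iF1: "F1 integrable_on {0..L}" by (rule integrable_continuous_interval) (rule continuous_on_subset[OF cF1], simp)
  have "integral {0..L} r = integral {0..L} F1 - integral {0..L} (\<lambda>x. c1)"
    unfolding r_def by (rule integral_diff[OF iF1 integrable_const_ivl])
  also have "\<dots> = 0" using L by (simp add: c1_def)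
  finally have "integral {0..L} r = 0" .
  moreover have "F2 L - F2 0 = integral {0..L} r" using ftc_UNIV[OF F2, of 0 L] L by (simp add: integral_unique)
  ultimately have F2p: "\<And>x. F2 (x + L) = F2 x" using periodic_antideriv[OF F2 rp] by simp
  have rq: "\<And>x. (r has_real_derivative q x) (at x)"
    unfolding r_def using DERIV_diff[OF F1 DERIV_const] by simp
  have "per_C2_test L F2 r q" unfolding per_C2_test_def using F2p F2 rq cq by blast
  then have o: "(LINT x:{0..L}|lborel. e x * q x) = 0" by (rule orth)
  have ceq: "continuous_on {0..L} (\<lambda>x. e x * q x)"
    by (intro continuous_intros ce) (rule continuous_on_subset[OF cq], simp)
  have "set_integrable lborel {0..L} (\<lambda>x. e x * q x)"
    unfolding set_integrable_def by (rule borel_integrable_compact[OF compact_Icc ceq])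
  from set_borel_integral_eq_integral(2)[OF this] o
  have "integral {0..L} (\<lambda>x. e x * q x) = 0" by simp
  then have ie\<psi>: "integral {0..L} (\<lambda>x. e x * \<psi> x) = 0"
    using integral_cong[of "{0..L}" "\<lambda>x. e x * q x" "\<lambda>x. e x * \<psi> x"] q\<psi> by simp
  have i1: "(\<lambda>x. e x * \<psi> x) integrable_on {0..L}"
    by (rule integrable_continuous_interval) (intro continuous_intros ce c\<psi>)
  have i2: "(\<lambda>x. m * \<psi> x) integrable_on {0..L}"
    by (rule integrable_continuous_interval) (intro continuous_intros c\<psi>)
  have "integral {0..L} (\<lambda>x. (\<psi> x)\<^sup>2) = integral {0..L} (\<lambda>x. e x * \<psi> x - m * \<psi> x)"
    by (rule integral_cong) (simp add: \<psi>_def power2_eq_square algebra_simps)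
  also have "\<dots> = 0" using integral_diff[OF i1 i2] ie\<psi> int\<psi> by simp
  finally have "((\<lambda>x. (\<psi> x)\<^sup>2) has_integral 0) {0..L}"
    using integrable_continuous_interval[of 0 L "\<lambda>x. (\<psi> x)\<^sup>2"] c\<psi>
    by (metis continuous_on_power has_integral_integral)
  then have z: "\<And>x. x \<in> {0..L} \<Longrightarrow> (\<psi> x)\<^sup>2 = 0"
    using has_integral_0_cbox_imp_0[of 0 L "\<lambda>x. (\<psi> x)\<^sup>2"] L c\<psi>
    by (auto intro!: continuous_intros)
  show ?thesis
  proof
    fix x assume "x \<in> {0..L}"
    then have "e x = m" "e 0 = m" using z[of x] z[of 0] L by (auto simp: \<psi>_def)
    then show "e x = e 0" by simp
  qed
qed

definition Hk :: "(real \<Rightarrow> real) \<Rightarrow> real \<Rightarrow> real" where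
  "Hk G x = (\<integral>s. G s * max 0 (x - s) \<partial>lborel)"

definition Sk :: "(real \<Rightarrow> real) \<Rightarrow> real \<Rightarrow> real" where
  "Sk G x = (\<integral>s. G s * indicator {..<x} s \<partial>lborel)"

lemma intH:
  fixes G :: "real \<Rightarrow> real"
  assumes intG: "integrable lborel G" and supp: "\<And>s. s \<notin> {0..L} \<Longrightarrow> G s = 0"
  shows "integrable lborel (\<lambda>s. G s * max 0 (x - s))"
proof (rule Bochner_Integration.integrable_bound[where f="\<lambda>s. \<bar>x\<bar> * G s"])
  show "integrable lborel (\<lambda>s. \<bar>x\<bar> * G s)" using intG by simp
  show "(\<lambda>s. G s * max 0 (x - s)) \<in> borel_measurable lborel"
    using borel_measurable_integrable[OF intG] by measurable
  show "AE s in lborel. norm (G s * max 0 (x - s)) \<le> norm (\<bar>x\<bar> * G s)"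
  proof (intro AE_I2)
    fix s
    show "norm (G s * max 0 (x - s)) \<le> norm (\<bar>x\<bar> * G s)"
    proof (cases "s \<in> {0..L}")
      case True
      then have "\<bar>max 0 (x - s)\<bar> \<le> \<bar>x\<bar>" by auto
      then have "\<bar>G s\<bar> * \<bar>max 0 (x - s)\<bar> \<le> \<bar>G s\<bar> * \<bar>x\<bar>" by (rule mult_left_mono) simp
      then show ?thesis by (simp add: abs_mult mult.commute)
    next
      case False
      then show ?thesis using supp by simp
    qed
  qed
qed

lemma H_lipschitz:
  fixes G :: "real \<Rightarrow> real"
  assumes intG: "integrable lborel G" and supp: "\<And>s. s \<notin> {0..L} \<Longrightarrow> G s = 0"
  shows "\<bar>Hk G x - Hk G y\<bar> \<le> (\<integral>s. \<bar>G s\<bar> \<partial>lborel) * \<bar>x - y\<bar>"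
proof -
  have "Hk G x - Hk G y = (\<integral>s. G s * max 0 (x - s) - G s * max 0 (y - s) \<partial>lborel)"
    unfolding Hk_def by (rule Bochner_Integration.integral_diff[OF intH[OF intG supp, where x=x] intH[OF intG supp, where x=y], symmetric])
  also have "\<bar>\<dots>\<bar> \<le> (\<integral>s. \<bar>G s * max 0 (x - s) - G s * max 0 (y - s)\<bar> \<partial>lborel)"
    by (rule integral_abs_bound)
  also have "\<dots> \<le> (\<integral>s. \<bar>G s\<bar> * \<bar>x - y\<bar> \<partial>lborel)"
  proof (rule integral_mono)
    show "integrable lborel (\<lambda>s. \<bar>G s * max 0 (x - s) - G s * max 0 (y - s)\<bar>)"
      using intH[OF intG supp] by auto
    show "integrable lborel (\<lambda>s. \<bar>G s\<bar> * \<bar>x - y\<bar>)" using intG by auto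
    fix s
    have "\<bar>max 0 (x - s) - max 0 (y - s)\<bar> \<le> \<bar>x - y\<bar>" by (auto simp: max_def abs_if)
    then show "\<bar>G s * max 0 (x - s) - G s * max 0 (y - s)\<bar> \<le> \<bar>G s\<bar> * \<bar>x - y\<bar>"
      by (simp add: right_diff_distrib[symmetric] abs_mult mult_left_mono)
  qed
  also have "\<dots> = (\<integral>s. \<bar>G s\<bar> \<partial>lborel) * \<bar>x - y\<bar>" by simp
  finally show ?thesis .
qed

lemma H_cont:
  fixes G :: "real \<Rightarrow> real"
  assumes intG: "integrable lborel G" and supp: "\<And>s. s \<notin> {0..L} \<Longrightarrow> G s = 0"
  shows "continuous_on UNIV (Hk G)"
proof (rule lipschitz_on_continuous_on)
  show "(\<integral>s. \<bar>G s\<bar> \<partial>lborel)-lipschitz_on UNIV (Hk G)"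
    by (rule lipschitz_onI) (use H_lipschitz[OF intG supp] in \<open>auto simp: dist_real_def\<close>)
qed

lemma pair_sf_lborel: "pair_sigma_finite lborel lborel"
  by unfold_locales

lemma prod_integrable:
  fixes a b :: "real \<Rightarrow> real"
  assumes ia: "integrable lborel a" and ib: "integrable lborel b"
  shows "integrable (lborel \<Otimes>\<^sub>M lborel) (\<lambda>(x,y). a x * b y)"
proof (rule pair_sigma_finite.Fubini_integrable[OF pair_sf_lborel])
  have [measurable]: "a \<in> borel_measurable lborel" "b \<in> borel_measurable lborel"
    using ia ib by auto
  show "(\<lambda>(x,y). a x * b y) \<in> borel_measurable (lborel \<Otimes>\<^sub>M lborel)" by measurable
  show "integrable lborel (\<lambda>x. \<integral>y. norm ((\<lambda>(x,y). a x * b y) (x, y)) \<partial>lborel)"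
    using ia ib by (simp add: abs_mult)
  show "AE x in lborel. integrable lborel (\<lambda>y. (\<lambda>(x,y). a x * b y) (x, y))"
    using ib by simp
qed

lemma per_C2_facts:
  assumes "per_C2_test L \<phi> \<phi>' \<phi>''"
  shows "\<And>x. \<phi> (x + L) = \<phi> x" "\<And>x. (\<phi> has_real_derivative \<phi>' x) (at x)"
    "\<And>x. (\<phi>' has_real_derivative \<phi>'' x) (at x)" "continuous_on UNIV \<phi>''"
    "continuous_on UNIV \<phi>" "continuous_on UNIV \<phi>'"
  using assms unfolding per_C2_test_def
  by (auto intro!: continuous_at_imp_continuous_on DERIV_isCont)

lemma kernel_inner:
  fixes \<phi> \<phi>' \<phi>'' :: "real \<Rightarrow> real"
  assumes per: "per_C2_test L \<phi> \<phi>' \<phi>''" and s: "s \<in> {0..L}"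
  shows "(\<integral>x. indicator {0..L} x * \<phi>'' x * max 0 (x - s) \<partial>lborel) = (L - s) * \<phi>' L - \<phi> L + \<phi> s"
proof -
  note pf = per_C2_facts[OF per]
  have eq: "(\<lambda>x. indicator {0..L} x * \<phi>'' x * max 0 (x - s)) = (\<lambda>x. indicator {s..L} x *\<^sub>R ((x - s) * \<phi>'' x))"
    using s by (auto simp: indicator_def max_def fun_eq_iff)
  have cont: "continuous_on {s..L} (\<lambda>x. (x - s) * \<phi>'' x)"
    by (intro continuous_intros) (rule continuous_on_subset[OF pf(4)], simp)
  have si: "set_integrable lborel {s..L} (\<lambda>x. (x - s) * \<phi>'' x)"
    unfolding set_integrable_def by (rule borel_integrable_compact[OF compact_Icc cont])
  have "(\<integral>x. indicator {0..L} x * \<phi>'' x * max 0 (x - s) \<partial>lborel) = (LINT x:{s..L}|lborel. (x - s) * \<phi>'' x)"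
    unfolding eq set_lebesgue_integral_def ..
  also have "\<dots> = integral {s..L} (\<lambda>x. (x - s) * \<phi>'' x)"
    by (rule set_borel_integral_eq_integral(2)[OF si])
  also have "\<dots> = ((L - s) * \<phi>' L - \<phi> L) - ((s - s) * \<phi>' s - \<phi> s)"
  proof (rule integral_unique, rule ftc_UNIV)
    fix x
    show "((\<lambda>x. (x - s) * \<phi>' x - \<phi> x) has_real_derivative (x - s) * \<phi>'' x) (at x)"
      using DERIV_diff[OF DERIV_mult[OF DERIV_diff[OF DERIV_ident DERIV_const[of s]] pf(3)[of x]] pf(2)[of x]]
      by (simp add: mult.commute)
  qed (use s in auto)
  finally show ?thesis by simp
qed

lemma bounded_on_Icc:
  fixes \<phi> :: "real \<Rightarrow> real"
  assumes "continuous_on {a..b} \<phi>"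
  obtains B where "\<And>x. x \<in> {a..b} \<Longrightarrow> \<bar>\<phi> x\<bar> \<le> B"
proof -
  have "bounded (\<phi> ` {a..b})" by (rule compact_imp_bounded[OF compact_continuous_image[OF assms compact_Icc]])
  then obtain B where "\<forall>x\<in>{a..b}. \<bar>\<phi> x\<bar> \<le> B" by (auto simp: bounded_iff)
  then show ?thesis using that by blast
qed

lemma kernel_identity:
  fixes G \<phi> \<phi>' \<phi>'' :: "real \<Rightarrow> real"
  assumes intG: "integrable lborel G" and supp: "\<And>s. s \<notin> {0..L} \<Longrightarrow> G s = 0"
    and per: "per_C2_test L \<phi> \<phi>' \<phi>''" and L: "L > 0"
  shows "(LINT x:{0..L}|lborel. Hk G x * \<phi>'' x)
     = \<phi>' L * Hk G L - \<phi> L * (\<integral>s. G s \<partial>lborel) + (\<integral>s. G s * \<phi> s \<partial>lborel)"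
proof -
  note pf = per_C2_facts[OF per]
  have [measurable]: "G \<in> borel_measurable lborel" using intG by auto
  have [measurable]: "\<phi>'' \<in> borel_measurable lborel" using borel_measurable_continuous_onI[OF pf(4)] by simp
  have [measurable]: "\<phi> \<in> borel_measurable lborel" using borel_measurable_continuous_onI[OF pf(5)] by simp
  define f where "f = (\<lambda>x s. indicator {0..L} x * \<phi>'' x * (G s * max 0 (x - s)))"
  have ia: "integrable lborel (\<lambda>x. L * (indicator {0..L} x *\<^sub>R \<phi>'' x))"
    using borel_integrable_compact[OF compact_Icc continuous_on_subset[OF pf(4)]] by simp
  have int_f: "integrable (lborel \<Otimes>\<^sub>M lborel) (case_prod f)"
  proof (rule Bochner_Integration.integrable_bound[OF prod_integrable[OF ia intG]])
    show "case_prod f \<in> borel_measurable (lborel \<Otimes>\<^sub>M lborel)" unfolding f_def by measurable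
    show "AE p in lborel \<Otimes>\<^sub>M lborel. norm (case_prod f p) \<le> norm ((\<lambda>(x,y). L * (indicator {0..L} x *\<^sub>R \<phi>'' x) * G y) p)"
    proof (rule AE_I2, clarify)
      fix x s
      show "norm (f x s) \<le> norm (L * (indicator {0..L} x *\<^sub>R \<phi>'' x) * G s)"
      proof (cases "x \<in> {0..L} \<and> s \<in> {0..L}")
        case True
        then have m: "\<bar>max 0 (x - s)\<bar> \<le> L" by auto
        have "\<bar>\<phi>'' x\<bar> * \<bar>G s\<bar> * \<bar>max 0 (x - s)\<bar> \<le> \<bar>\<phi>'' x\<bar> * \<bar>G s\<bar> * L"
          by (rule mult_left_mono[OF m]) simp
        then show ?thesis using True L by (simp add: f_def abs_mult mult_ac)
      next
        case False
        then show ?thesis using supp by (auto simp: f_def indicator_def)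
      qed
    qed
  qed
  have fub: "(\<integral>s. \<integral>x. f x s \<partial>lborel \<partial>lborel) = (\<integral>x. \<integral>s. f x s \<partial>lborel \<partial>lborel)"
    by (rule pair_sigma_finite.Fubini_integral[OF pair_sf_lborel int_f])
  have rhs: "(\<integral>x. \<integral>s. f x s \<partial>lborel \<partial>lborel) = (LINT x:{0..L}|lborel. Hk G x * \<phi>'' x)"
  proof -
    have "\<And>x. (\<integral>s. f x s \<partial>lborel) = indicator {0..L} x * \<phi>'' x * Hk G x"
      unfolding f_def Hk_def by (rule integral_mult_right_zero)
    then show ?thesis unfolding set_lebesgue_integral_def by (simp add: mult_ac)
  qed
  have inner: "(\<integral>x. f x s \<partial>lborel) = G s * ((L - s) * \<phi>' L - \<phi> L + \<phi> s)" for s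
  proof -
    have "(\<integral>x. f x s \<partial>lborel) = G s * (\<integral>x. indicator {0..L} x * \<phi>'' x * max 0 (x - s) \<partial>lborel)"
      unfolding f_def by (simp add: mult_ac)
    then show ?thesis using kernel_inner[OF per, of s] supp[of s] by (cases "s \<in> {0..L}") auto
  qed
  obtain B where B: "\<And>x. x \<in> {0..L} \<Longrightarrow> \<bar>\<phi> x\<bar> \<le> B"
    using bounded_on_Icc[OF continuous_on_subset[OF pf(5)]] by blast
  have i3: "integrable lborel (\<lambda>s. G s * \<phi> s)"
  proof (rule Bochner_Integration.integrable_bound[where f="\<lambda>s. B * G s"])
    show "integrable lborel (\<lambda>s. B * G s)" using intG by simp
    show "(\<lambda>s. G s * \<phi> s) \<in> borel_measurable lborel" by measurable
    show "AE s in lborel. norm (G s * \<phi> s) \<le> norm (B * G s)"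
    proof (rule AE_I2)
      fix s
      show "norm (G s * \<phi> s) \<le> norm (B * G s)"
      proof (cases "s \<in> {0..L}")
        case True
        have "\<bar>G s\<bar> * \<bar>\<phi> s\<bar> \<le> \<bar>G s\<bar> * B" by (rule mult_left_mono[OF B[OF True]]) simp
        moreover have "B \<ge> 0" using B[OF True] by simp
        ultimately show ?thesis by (simp add: abs_mult mult_ac)
      qed (use supp in simp)
    qed
  qed
  have i1: "integrable lborel (\<lambda>s. G s * max 0 (L - s))" by (rule intH[OF intG supp])
  have pw: "G s * ((L - s) * \<phi>' L - \<phi> L + \<phi> s) = \<phi>' L * (G s * max 0 (L - s)) - \<phi> L * G s + G s * \<phi> s" for s
    using supp[of s] by (cases "s \<in> {0..L}") (auto simp: algebra_simps)
  have "(\<integral>s. \<integral>x. f x s \<partial>lborel \<partial>lborel) = (\<integral>s. \<phi>' L * (G s * max 0 (L - s)) - \<phi> L * G s + G s * \<phi> s \<partial>lborel)"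
    unfolding inner pw ..
  also have "\<dots> = \<phi>' L * Hk G L - \<phi> L * (\<integral>s. G s \<partial>lborel) + (\<integral>s. G s * \<phi> s \<partial>lborel)"
    using i1 i3 intG by (simp add: Hk_def)
  finally show ?thesis using fub rhs by simp
qed

lemma rho_bound:
  fixes y x0 s :: real
  shows "\<bar>max 0 (y - s) - max 0 (x0 - s) - indicator {..<x0} s * (y - x0)\<bar>
     \<le> \<bar>y - x0\<bar> * indicator {min y x0..max y x0} s"
  by (auto simp: indicator_def max_def min_def abs_if split: if_splits)

lemma amgm_ind:
  fixes a c i :: real
  assumes c: "c > 0" and i: "i = 0 \<or> i = 1"
  shows "\<bar>a\<bar> * i \<le> a\<^sup>2 * c / 2 + i / (2 * c)"
proof (cases "i = 0")
  case True then show ?thesis using c by simp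
next
  case False
  then have i1: "i = 1" using i by simp
  have "0 \<le> (c * \<bar>a\<bar> - 1)\<^sup>2" by simp
  then have "2 * c * \<bar>a\<bar> \<le> c\<^sup>2 * a\<^sup>2 + 1" by (simp add: power2_eq_square algebra_simps)
  then have "\<bar>a\<bar> \<le> (c\<^sup>2 * a\<^sup>2 + 1) / (2 * c)" using c by (simp add: field_simps)
  also have "\<dots> = a\<^sup>2 * c / 2 + 1 / (2 * c)" using c by (simp add: field_simps power2_eq_square)
  finally show ?thesis using i1 by simp
qed

lemma H_estimate:
  fixes G :: "real \<Rightarrow> real"
  assumes intG: "integrable lborel G" and supp: "\<And>s. s \<notin> {0..L} \<Longrightarrow> G s = 0"
    and int2: "integrable lborel (\<lambda>s. (G s)\<^sup>2)"
  shows "\<bar>Hk G y - Hk G x0 - Sk G x0 * (y - x0)\<bar>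
     \<le> ((\<integral>s. (G s)\<^sup>2 \<partial>lborel) + 1) / 2 * \<bar>y - x0\<bar> * sqrt \<bar>y - x0\<bar>"
proof (cases "y = x0")
  case True then show ?thesis by simp
next
  case False
  define d where "d = \<bar>y - x0\<bar>"
  define c where "c = sqrt d"
  define Q where "Q = (\<integral>s. (G s)\<^sup>2 \<partial>lborel)"
  define I where "I = {min y x0..max y x0}"
  have dpos: "d > 0" using False by (simp add: d_def)
  have cpos: "c > 0" using dpos by (simp add: c_def)
  have dc: "d / c = c" using dpos by (simp add: c_def real_div_sqrt)
  have [measurable]: "G \<in> borel_measurable lborel" using intG by auto
  have iS: "integrable lborel (\<lambda>s. G s * indicator {..<x0} s)"
    by (rule Bochner_Integration.integrable_bound[where f=G]) (auto simp: intG indicator_def)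
  have iI: "integrable lborel (indicator I :: real \<Rightarrow> real)"
    by (rule integrable_real_indicator) (auto simp: I_def)
  have mI: "(\<integral>s. indicator I s \<partial>lborel) = d"
  proof -
    have "(\<integral>s. indicator I s \<partial>lborel) = measure lborel I" by (simp add: I_def)
    also have "\<dots> = max y x0 - min y x0" unfolding I_def by (rule measure_lborel_Icc) simp
    also have "\<dots> = d" by (simp add: d_def max_def min_def)
    finally show ?thesis .
  qed
  define \<rho> where "\<rho> = (\<lambda>s. max 0 (y - s) - max 0 (x0 - s) - indicator {..<x0} s * (y - x0))"
  have eq: "Hk G y - Hk G x0 - Sk G x0 * (y - x0) = (\<integral>s. G s * \<rho> s \<partial>lborel)"
  proof -
    have "(\<integral>s. G s * \<rho> s \<partial>lborel) = (\<integral>s. G s * max 0 (y - s) - G s * max 0 (x0 - s) - (y - x0) * (G s * indicator {..<x0} s) \<partial>lborel)"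
      by (rule Bochner_Integration.integral_cong) (auto simp: \<rho>_def algebra_simps)
    also have "\<dots> = Hk G y - Hk G x0 - Sk G x0 * (y - x0)"
      using intH[OF intG supp, where x=y] intH[OF intG supp, where x=x0] iS
      by (simp add: Hk_def Sk_def mult.commute)
    finally show ?thesis by simp
  qed
  have pw: "\<bar>G s * \<rho> s\<bar> \<le> d * ((G s)\<^sup>2 * c / 2 + indicator I s / (2 * c))" for s
  proof -
    have "\<bar>G s * \<rho> s\<bar> = \<bar>G s\<bar> * \<bar>\<rho> s\<bar>" by (simp add: abs_mult)
    also have "\<dots> \<le> \<bar>G s\<bar> * (d * indicator I s)"
      by (rule mult_left_mono) (use rho_bound[of y s x0] in \<open>auto simp: \<rho>_def d_def I_def\<close>)
    also have "\<dots> = d * (\<bar>G s\<bar> * indicator I s)" by simp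
    also have "\<dots> \<le> d * ((G s)\<^sup>2 * c / 2 + indicator I s / (2 * c))"
      by (rule mult_left_mono[OF amgm_ind[OF cpos]]) (use dpos in \<open>auto simp: indicator_def\<close>)
    finally show ?thesis .
  qed
  have iR: "integrable lborel (\<lambda>s. d * ((G s)\<^sup>2 * c / 2 + indicator I s / (2 * c)))"
    using int2 iI by simp
  have iGr: "integrable lborel (\<lambda>s. G s * \<rho> s)"
    unfolding \<rho>_def using intH[OF intG supp, where x=y] intH[OF intG supp, where x=x0] iS
    by (simp add: right_diff_distrib algebra_simps)
  have "\<bar>\<integral>s. G s * \<rho> s \<partial>lborel\<bar> \<le> (\<integral>s. \<bar>G s * \<rho> s\<bar> \<partial>lborel)"
    by (rule integral_abs_bound)
  also have "\<dots> \<le> (\<integral>s. d * ((G s)\<^sup>2 * c / 2 + indicator I s / (2 * c)) \<partial>lborel)"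
    by (rule integral_mono[OF _ iR pw]) (use iGr in simp)
  also have "\<dots> = d * (Q * c / 2 + d / (2 * c))"
    using int2 iI mI by (simp add: Q_def)
  also have "\<dots> = (Q + 1) / 2 * d * c"
    using dc cpos by (simp add: field_simps)
  finally show ?thesis using eq by (simp add: Q_def d_def c_def)
qed

lemma Sk_0:
  assumes supp: "\<And>s. s \<notin> {0..L} \<Longrightarrow> G s = 0"
  shows "Sk G 0 = 0"
proof -
  have "(\<lambda>s. G s * indicator {..<0::real} s) = (\<lambda>_. 0)" using supp by (auto simp: indicator_def fun_eq_iff)
  then show ?thesis by (simp add: Sk_def)
qed

lemma Sk_L:
  assumes intG: "integrable lborel G" and supp: "\<And>s. s \<notin> {0..L} \<Longrightarrow> G s = 0"
  shows "Sk G L = (\<integral>s. G s \<partial>lborel)"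
  unfolding Sk_def
proof (rule integral_cong_AE)
  have [measurable]: "G \<in> borel_measurable lborel" using intG by auto
  show "AE s in lborel. G s * indicator {..<L} s = G s"
    using AE_lborel_singleton[of L] by eventually_elim (use supp in \<open>auto simp: indicator_def\<close>)
  show "(\<lambda>s. G s * indicator {..<L} s) \<in> borel_measurable lborel" by measurable
qed (use intG in auto)

lemma core:
  fixes f g :: "real \<Rightarrow> real" and L p :: real
  assumes L: "L > 0" and p1: "1 < p" and p2: "p < 3/2"
    and cf: "continuous_on {0..L} f" and fnn: "\<forall>x\<in>{0..L}. f x \<ge> 0" and f0: "f 0 = f L"
    and wk: "weak_dxx_per L (\<lambda>x. f x powr p) g"
    and fin: "(\<integral>\<^sup>+ x \<in> {0..L}. ennreal ((g x)\<^sup>2) \<partial>lborel) \<noteq> \<infinity>"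
  shows "\<forall>x0\<in>{0..L}. f x0 = 0 \<longrightarrow> (per_ext L f has_real_derivative 0) (at x0)"
proof -
  define v where "v = (\<lambda>x. f x powr p)"
  have cv: "continuous_on {0..L} v"
    unfolding v_def by (rule continuous_on_powr'[OF cf continuous_on_const]) (use fnn p1 in auto)
  have vnn: "\<And>x. v x \<ge> 0" by (simp add: v_def)
  have v0: "v 0 = v L" by (simp add: v_def f0)
  have sg: "set_integrable lborel {0..L} g" and
    W: "\<And>\<phi> \<phi>' \<phi>''. per_C2_test L \<phi> \<phi>' \<phi>'' \<Longrightarrow>
        (LINT x:{0..L}|lborel. v x * \<phi>'' x) = (LINT x:{0..L}|lborel. g x * \<phi> x)"
    using wk unfolding weak_dxx_per_def v_def by auto
  define G where "G = (\<lambda>s. indicator {0..L} s * g s)"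
  have intG: "integrable lborel G" using sg by (simp add: set_integrable_def G_def)
  have supp: "\<And>s. s \<notin> {0..L} \<Longrightarrow> G s = 0" by (simp add: G_def)
  have [measurable]: "G \<in> borel_measurable lborel" using intG by auto
  have int2: "integrable lborel (\<lambda>s. (G s)\<^sup>2)"
  proof (rule integrableI_bounded)
    show "(\<lambda>s. (G s)\<^sup>2) \<in> borel_measurable lborel" by measurable
    have "(\<integral>\<^sup>+ s. ennreal (norm ((G s)\<^sup>2)) \<partial>lborel) = (\<integral>\<^sup>+ x \<in> {0..L}. ennreal ((g x)\<^sup>2) \<partial>lborel)"
      by (rule nn_integral_cong) (auto simp: G_def indicator_def)
    then show "(\<integral>\<^sup>+ s. ennreal (norm ((G s)\<^sup>2)) \<partial>lborel) < \<infinity>" using fin by (simp add: top.not_eq_extremum)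
  qed
  have "per_C2_test L (\<lambda>_. 1) (\<lambda>_. 0) (\<lambda>_. 0)"
    unfolding per_C2_test_def by (auto intro: DERIV_const)
  from W[OF this] have intG0: "(\<integral>s. G s \<partial>lborel) = 0"
    by (simp add: set_lebesgue_integral_def G_def)
  define A where "A = Hk G L"
  define e where "e = (\<lambda>x. v x - Hk G x + A / L * x)"
  have cH: "continuous_on UNIV (Hk G)" by (rule H_cont[OF intG supp])
  have ce: "continuous_on {0..L} e" unfolding e_def
    by (intro continuous_intros cv) (rule continuous_on_subset[OF cH], simp)
  have H0: "Hk G 0 = 0"
  proof -
    have "(\<lambda>s. G s * max 0 (0 - s)) = (\<lambda>_. 0)" using supp by (force simp: fun_eq_iff)
    then show ?thesis by (simp add: Hk_def)
  qed
  have e0: "e 0 = e L" using L v0 H0 by (simp add: e_def A_def)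
  have orth: "(LINT x:{0..L}|lborel. e x * \<phi>'' x) = 0" if per: "per_C2_test L \<phi> \<phi>' \<phi>''" for \<phi> \<phi>' \<phi>''
  proof -
    note pf = per_C2_facts[OF per]
    have c2: "continuous_on {0..L} \<phi>''" by (rule continuous_on_subset[OF pf(4)]) simp
    have si: "set_integrable lborel {0..L} h" if "continuous_on {0..L} h" for h :: "real \<Rightarrow> real"
      unfolding set_integrable_def using borel_integrable_compact[OF compact_Icc that] by simp
    have s1: "set_integrable lborel {0..L} (\<lambda>x. v x * \<phi>'' x)" by (rule si) (intro continuous_intros cv c2)
    have s2: "set_integrable lborel {0..L} (\<lambda>x. Hk G x * \<phi>'' x)"
      by (rule si) (intro continuous_intros c2 continuous_on_subset[OF cH], simp)
    have s3: "set_integrable lborel {0..L} (\<lambda>x. A / L * (x * \<phi>'' x))" by (rule si) (intro continuous_intros c2)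
    have "(LINT x:{0..L}|lborel. e x * \<phi>'' x) = (LINT x:{0..L}|lborel. (v x * \<phi>'' x - Hk G x * \<phi>'' x) + A / L * (x * \<phi>'' x))"
      by (rule set_lebesgue_integral_cong) (auto simp: e_def algebra_simps)
    also have "\<dots> = (LINT x:{0..L}|lborel. v x * \<phi>'' x) - (LINT x:{0..L}|lborel. Hk G x * \<phi>'' x)
        + A / L * (LINT x:{0..L}|lborel. x * \<phi>'' x)"
      using s1 s2 s3 by simp
    also have "(LINT x:{0..L}|lborel. v x * \<phi>'' x) = (\<integral>s. G s * \<phi> s \<partial>lborel)"
      using W[OF per] by (simp add: set_lebesgue_integral_def G_def mult_ac)
    also have "(LINT x:{0..L}|lborel. Hk G x * \<phi>'' x) = \<phi>' L * A - \<phi> L * 0 + (\<integral>s. G s * \<phi> s \<partial>lborel)"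
      using kernel_identity[OF intG supp per L] intG0 by (simp add: A_def)
    also have "(LINT x:{0..L}|lborel. x * \<phi>'' x) = L * \<phi>' L"
    proof -
      have "(LINT x:{0..L}|lborel. x * \<phi>'' x) = (\<integral>x. indicator {0..L} x * \<phi>'' x * max 0 (x - 0) \<partial>lborel)"
        unfolding set_lebesgue_integral_def
        by (rule Bochner_Integration.integral_cong) (auto simp: indicator_def)
      also have "\<dots> = (L - 0) * \<phi>' L - \<phi> L + \<phi> 0" by (rule kernel_inner[OF per]) (use L in auto)
      also have "\<dots> = L * \<phi>' L" using pf(1)[of 0] by simp
      finally show ?thesis .
    qed
    finally show ?thesis using L by simp
  qed
  have econst: "\<forall>x\<in>{0..L}. e x = e 0" by (rule dbr[OF L ce e0 orth])
  define Q where "Q = (\<integral>s. (G s)\<^sup>2 \<partial>lborel)"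
  define K where "K = (Q + 1) / 2"
  have "Q \<ge> 0" unfolding Q_def by (rule Bochner_Integration.integral_nonneg) simp
  then have Kpos: "K \<ge> 0" unfolding K_def by simp
  have est: "\<bar>v y - (Sk G x0 - A / L) * (y - x0)\<bar> \<le> K * \<bar>y - x0\<bar> * sqrt \<bar>y - x0\<bar>"
    if "x0 \<in> {0..L}" "y \<in> {0..L}" "v x0 = 0" for x0 y
  proof -
    have "e y = e 0" "e x0 = e 0" using econst that(1,2) by blast+
    then have "v y - Hk G y + A / L * y = v x0 - Hk G x0 + A / L * x0" unfolding e_def by simp
    moreover have "A / L * (y - x0) = A / L * y - A / L * x0" by (rule right_diff_distrib)
    moreover have "(Sk G x0 - A / L) * (y - x0) = Sk G x0 * (y - x0) - A / L * (y - x0)" by (rule left_diff_distrib)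
    ultimately have "v y - (Sk G x0 - A / L) * (y - x0) = Hk G y - Hk G x0 - Sk G x0 * (y - x0)"
      using that(3) by linarith
    moreover have "\<bar>Hk G y - Hk G x0 - Sk G x0 * (y - x0)\<bar> \<le> ((\<integral>s. (G s)\<^sup>2 \<partial>lborel) + 1) / 2 * \<bar>y - x0\<bar> * sqrt \<bar>y - x0\<bar>"
      by (rule H_estimate[OF intG supp int2])
    ultimately show ?thesis unfolding K_def Q_def by argo
  qed
  have zero_bound: "\<forall>y\<in>{0..L}. v y \<le> K * \<bar>y - x0\<bar> * sqrt \<bar>y - x0\<bar>"
    if x0: "x0 \<in> {0..L}" and vz: "v x0 = 0" for x0
  proof -
    define m where "m = Sk G x0 - A / L"
    have R: "\<forall>y\<in>{0..L}. \<bar>v y - m * (y - x0)\<bar> \<le> K * \<bar>y - x0\<bar> * sqrt \<bar>y - x0\<bar>"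
      using est[OF x0 _ vz] by (simp add: m_def)
    have nn: "\<forall>y\<in>{0..L}. v y \<ge> 0" using vnn by simp
    have "m = 0"
    proof (cases "0 < x0 \<and> x0 < L")
      case True
      then show ?thesis using slope_nonneg[OF nn x0 vz Kpos R] by linarith
    next
      case False
      then have bd: "x0 = 0 \<or> x0 = L" using x0 by auto
      then have vb: "v 0 = 0" "v L = 0" using vz v0 by auto
      have R0: "\<forall>y\<in>{0..L}. \<bar>v y - (Sk G 0 - A / L) * (y - 0)\<bar> \<le> K * \<bar>y - 0\<bar> * sqrt \<bar>y - 0\<bar>"
        using est[of 0 _] vb L by auto
      have RL: "\<forall>y\<in>{0..L}. \<bar>v y - (Sk G L - A / L) * (y - L)\<bar> \<le> K * \<bar>y - L\<bar> * sqrt \<bar>y - L\<bar>"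
        using est[of L _] vb L by auto
      have a: "Sk G 0 - A / L \<ge> 0" by (rule slope_nonneg(1)[OF nn _ vb(1) Kpos R0]) (use L in auto)
      have b: "Sk G L - A / L \<le> 0" by (rule slope_nonneg(2)[OF nn _ vb(2) Kpos RL]) (use L in auto)
      have "Sk G 0 = 0" "Sk G L = 0" using Sk_0[OF supp] Sk_L[OF intG supp] intG0 by auto
      then have "A / L = 0" using a b by linarith
      then show ?thesis using bd \<open>Sk G 0 = 0\<close> \<open>Sk G L = 0\<close> by (auto simp: m_def)
    qed
    then show ?thesis using R by (auto simp: abs_le_iff)
  qed
  define \<beta> where "\<beta> = 3 / (2 * p)"
  define C where "C = K powr (1 / p)"
  have \<beta>1: "\<beta> > 1" using p1 p2 by (simp add: \<beta>_def field_simps)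
  have fbound: "f y \<le> C * \<bar>y - z\<bar> powr \<beta>" if z: "z \<in> {0..L}" "f z = 0" and y: "y \<in> {0..L}" for y z
  proof -
    have vz: "v z = 0" using z p1 by (simp add: v_def)
    have vy: "v y \<le> K * \<bar>y - z\<bar> * sqrt \<bar>y - z\<bar>" using zero_bound[OF z(1) vz] y by auto
    have fy: "f y = v y powr (1 / p)"
      using fnn y p1 by (simp add: v_def powr_powr)
    have ds: "\<bar>y - z\<bar> * sqrt \<bar>y - z\<bar> = \<bar>y - z\<bar> powr (3/2)"
    proof (cases "y = z")
      case False
      have "\<bar>y - z\<bar> powr (3/2) = \<bar>y - z\<bar> powr (1 + 1/2)" by simp
      also have "\<dots> = \<bar>y - z\<bar> powr 1 * \<bar>y - z\<bar> powr (1/2)" by (rule powr_add)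
      also have "\<dots> = \<bar>y - z\<bar> * sqrt \<bar>y - z\<bar>" by (simp add: powr_half_sqrt)
      finally show ?thesis by simp
    qed simp
    have "f y \<le> (K * (\<bar>y - z\<bar> * sqrt \<bar>y - z\<bar>)) powr (1 / p)"
      unfolding fy by (rule powr_mono2) (use vnn vy p1 in \<open>auto simp: mult.assoc\<close>)
    also have "\<dots> = C * (\<bar>y - z\<bar> powr (3/2)) powr (1 / p)"
      unfolding ds C_def using Kpos by (simp add: powr_mult)
    also have "\<dots> = C * \<bar>y - z\<bar> powr \<beta>" by (simp add: powr_powr \<beta>_def)
    finally show ?thesis .
  qed
  show ?thesis
  proof (intro ballI impI)
    fix x0 assume x0: "x0 \<in> {0..L}" and fz: "f x0 = 0"
    obtain \<delta> where \<delta>: "\<delta> > 0" "\<And>x. \<bar>x - x0\<bar> < \<delta> \<Longrightarrow> \<exists>y\<in>{0..L}. \<exists>z\<in>{0..L}.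
     per_ext L f x = f y \<and> \<bar>y - z\<bar> = \<bar>x - x0\<bar> \<and> (z = x0 \<or> (x0 \<in> {0,L} \<and> z \<in> {0,L}))"
      using per_ext_near[OF L x0] by blast
    show "(per_ext L f has_real_derivative 0) (at x0)"
    proof (rule deriv_zero_from_bound[OF \<delta>(1) \<beta>1])
      show "per_ext L f x0 = 0" using per_ext_at[OF L x0, of f] f0 fz by simp
      fix x assume "\<bar>x - x0\<bar> < \<delta>"
      then obtain y z where yz: "y \<in> {0..L}" "z \<in> {0..L}" "per_ext L f x = f y" "\<bar>y - z\<bar> = \<bar>x - x0\<bar>"
        "z = x0 \<or> (x0 \<in> {0,L} \<and> z \<in> {0,L})" using \<delta>(2) by blast
      have "f z = 0" using yz(5) fz f0 by auto
      then have "f y \<le> C * \<bar>y - z\<bar> powr \<beta>" using fbound yz by blast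
      moreover have "f y \<ge> 0" using fnn yz by auto
      ultimately show "\<bar>per_ext L f x\<bar> \<le> C * \<bar>x - x0\<bar> powr \<beta>" using yz by simp
    qed
  qed
qed

theorem corollary3p2:
  fixes P :: "'w measure" and u :: "real \<Rightarrow> real \<Rightarrow> 'w \<Rightarrow> real"
    and L T \<alpha> :: real
  assumes "prob_space P"
    and "L > 0" and "T > 0"
    and "-1/3 < \<alpha>" and "\<alpha> < 0"
    and meas: "\<And>x t. (\<lambda>\<omega>. u x t \<omega>) \<in> borel_measurable P"
    and cont: "AE \<omega> in P. continuous_on ({0..L} \<times> {0..T}) (\<lambda>(x, t). u x t \<omega>)"
    and nonneg: "AE \<omega> in P. \<forall>x\<in>{0..L}. \<forall>t\<in>{0..T}. u x t \<omega> \<ge> 0"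
    and per: "AE \<omega> in P. \<forall>t\<in>{0..T}. u 0 t \<omega> = u L t \<omega>"
    and est: "\<And>a. -1/3 < a \<Longrightarrow> a < 0 \<Longrightarrow>
      \<exists>w :: real \<Rightarrow> real \<Rightarrow> 'w \<Rightarrow> real.
        (\<lambda>(x, t, \<omega>). w x t \<omega>) \<in> borel_measurable (lborel \<Otimes>\<^sub>M lborel \<Otimes>\<^sub>M P) \<and>
        (AE \<omega> in P. AE t in lborel. t \<in> {0..T} \<longrightarrow>
            weak_dxx_per L (\<lambda>x. (u x t \<omega>) powr ((a + 3) / 2)) (\<lambda>x. w x t \<omega>)) \<and>
        (\<forall>q::nat. q \<ge> 1 \<longrightarrow> (\<exists>C::real.
            (\<integral>\<^sup>+ \<omega>. (\<integral>\<^sup>+ t \<in> {0..T}. (\<integral>\<^sup>+ x \<in> {0..L}. ennreal ((w x t \<omega>)\<^sup>2) \<partial>lborel) \<partial>lborel) ^ q \<partial>P)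
              \<le> ennreal C))"
  shows "AE \<omega> in P. AE t\<^sub>0 in lborel. t\<^sub>0 \<in> {0<..T} \<longrightarrow>
           (\<forall>x\<^sub>0\<in>{0..L}. u x\<^sub>0 t\<^sub>0 \<omega> = 0 \<longrightarrow>
              ((per_ext L (\<lambda>x. u x t\<^sub>0 \<omega>)) has_real_derivative 0) (at x\<^sub>0))"
proof -
  interpret prob_space P by fact
  have L: "L > 0" by fact
  obtain w :: "real \<Rightarrow> real \<Rightarrow> 'w \<Rightarrow> real" where
    wm: "(\<lambda>(x, t, \<omega>). w x t \<omega>) \<in> borel_measurable (lborel \<Otimes>\<^sub>M lborel \<Otimes>\<^sub>M P)" and
    wAE: "AE \<omega> in P. AE t in lborel. t \<in> {0..T} \<longrightarrow>
            weak_dxx_per L (\<lambda>x. (u x t \<omega>) powr ((\<alpha> + 3) / 2)) (\<lambda>x. w x t \<omega>)" and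
    mom: "\<forall>q::nat. q \<ge> 1 \<longrightarrow> (\<exists>C::real.
            (\<integral>\<^sup>+ \<omega>. (\<integral>\<^sup>+ t \<in> {0..T}. (\<integral>\<^sup>+ x \<in> {0..L}. ennreal ((w x t \<omega>)\<^sup>2) \<partial>lborel) \<partial>lborel) ^ q \<partial>P)
              \<le> ennreal C)"
    using est[OF assms(4,5)] by blast
  obtain C :: real where C: "(\<integral>\<^sup>+ \<omega>. (\<integral>\<^sup>+ t \<in> {0..T}. (\<integral>\<^sup>+ x \<in> {0..L}. ennreal ((w x t \<omega>)\<^sup>2) \<partial>lborel) \<partial>lborel) \<partial>P)
              \<le> ennreal C"
    using mom[rule_format, of 1] by auto
  define N where "N = (\<lambda>t \<omega>. \<integral>\<^sup>+ x \<in> {0..L}. ennreal ((w x t \<omega>)\<^sup>2) \<partial>lborel)"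
  have m1: "(\<lambda>p. ennreal ((w (snd p) (snd (fst p)) (fst (fst p)))\<^sup>2) * indicator {0..L} (snd p))
      \<in> borel_measurable ((P \<Otimes>\<^sub>M lborel) \<Otimes>\<^sub>M lborel)"
  proof -
    have h: "(\<lambda>p. (snd p, snd (fst p), fst (fst p))) \<in> measurable ((P \<Otimes>\<^sub>M lborel) \<Otimes>\<^sub>M lborel) (lborel \<Otimes>\<^sub>M lborel \<Otimes>\<^sub>M P)"
      by measurable
    have W[measurable]: "(\<lambda>p. w (snd p) (snd (fst p)) (fst (fst p))) \<in> borel_measurable ((P \<Otimes>\<^sub>M lborel) \<Otimes>\<^sub>M lborel)"
      using measurable_compose[OF h wm] by simp
    show ?thesis by measurable
  qed
  have m2: "(\<lambda>(\<omega>, t). N t \<omega> * indicator {0..T} t) \<in> borel_measurable (P \<Otimes>\<^sub>M lborel)"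
  proof -
    have "(\<lambda>q. \<integral>\<^sup>+ x. (\<lambda>q x. ennreal ((w x (snd q) (fst q))\<^sup>2) * indicator {0..L} x) q x \<partial>lborel) \<in> borel_measurable (P \<Otimes>\<^sub>M lborel)"
      by (rule lborel.borel_measurable_nn_integral) (use m1 in \<open>simp add: case_prod_beta\<close>)
    then show ?thesis unfolding N_def by (simp add: case_prod_beta) measurable
  qed
  have mI: "(\<lambda>\<omega>. \<integral>\<^sup>+ t. N t \<omega> * indicator {0..T} t \<partial>lborel) \<in> borel_measurable P"
    by (rule lborel.borel_measurable_nn_integral) (use m2 in simp)
  have "(\<integral>\<^sup>+ \<omega>. (\<integral>\<^sup>+ t. N t \<omega> * indicator {0..T} t \<partial>lborel) \<partial>P) \<noteq> \<infinity>"
    using C by (auto simp: N_def top_unique)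
  from nn_integral_PInf_AE[OF mI this]
  have AEI: "AE \<omega> in P. (\<integral>\<^sup>+ t. N t \<omega> * indicator {0..T} t \<partial>lborel) \<noteq> \<infinity>" .
  show ?thesis
    using AEI cont nonneg per wAE AE_space
  proof eventually_elim
    case (elim \<omega>)
    have mt: "(\<lambda>t. N t \<omega> * indicator {0..T} t) \<in> borel_measurable lborel"
      using measurable_Pair2[OF m2 elim(6)] by simp
    have AEt: "AE t in lborel. N t \<omega> * indicator {0..T} t \<noteq> \<infinity>"
      by (rule nn_integral_PInf_AE[OF mt elim(1)])
    show ?case
      using AEt elim(5)
    proof eventually_elim
      case (elim t)
      show ?case
      proof (intro impI)
        assume t: "t \<in> {0<..T}"
        then have t': "t \<in> {0..T}" by auto
        have fin: "N t \<omega> \<noteq> \<infinity>" using elim(1) t' by simp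
        have wk: "weak_dxx_per L (\<lambda>x. (u x t \<omega>) powr ((\<alpha> + 3) / 2)) (\<lambda>x. w x t \<omega>)" using elim(2) t' by simp
        have cf: "continuous_on {0..L} (\<lambda>x. u x t \<omega>)"
        proof -
          have "continuous_on {0..L} ((\<lambda>(x, t). u x t \<omega>) \<circ> (\<lambda>x. (x, t)))"
            by (rule continuous_on_compose[OF _ continuous_on_subset[OF \<open>continuous_on ({0..L} \<times> {0..T}) (\<lambda>(x, t). u x t \<omega>)\<close>]])
               (use t' in \<open>auto intro!: continuous_intros\<close>)
          then show ?thesis by (simp add: o_def)
        qed
        show "\<forall>x\<^sub>0\<in>{0..L}. u x\<^sub>0 t \<omega> = 0 \<longrightarrow> (per_ext L (\<lambda>x. u x t \<omega>) has_real_derivative 0) (at x\<^sub>0)"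
          by (rule core[OF L _ _ cf _ _ wk])
             (use assms(4,5) \<open>\<forall>x\<in>{0..L}. \<forall>t\<in>{0..T}. u x t \<omega> \<ge> 0\<close> \<open>\<forall>t\<in>{0..T}. u 0 t \<omega> = u L t \<omega>\<close> t' fin
              in \<open>auto simp: N_def\<close>)
      qed
    qed
  qed
qed


end
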